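(* Let $U\in C^{2}([y_{1},y_{2}])$ and assume that for every $c\in(U_{\min},U_{\max})$ the set $\{y\in[y_1,y_2]: U(y)=c\}$ is finite, where $U_{\min}=\min U$, $U_{\max}=\max U$. Let $(c_s,\alpha_s,\beta,\phi_s)$ be a neutral mode with $\phi_s\in H^{2}(y_1,y_2)$, i.e. $c_s\in\mathbb{R}$, $\alpha_s>0$, $\beta\in\mathbb{R}$, and $\phi_s\in H^2(y_1,y_2)$ is a nontrivial function solving $$-\phi_s''+\alpha_s^{2}\phi_s-\frac{\beta-U''}{U-c_s}\phi_s=0\quad\text{on }(y_1,y_2)\setminus\{U=c_s\},\qquad \phi_s(y_1)=\phi_s(y_2)=0.$$ Then $c_s$ satisfies one of the following: (i) $c_s=U(z)$ for some $z\in[y_1,y_2]$ with $\beta=U''(z)$; (ii) $c_s=U(y_1)$ or $c_s=U(y_2)$; (iii) $c_s$ is a critical value of $U$; (iv) $c_s\notin \mathrm{Ran}(U)$.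
   Context: This concerns the Rayleigh–Kuo equation arising from linearizing the 2D incompressible Euler equation with Coriolis force (beta-plane, parameter $\beta$) around a shear flow $(U(y),0)$ in the channel $y\in[y_1,y_2]$. *)

theory Defs
  imports "HOL-Analysis.Analysis"
begin

definition C2_on :: "real \<Rightarrow> real \<Rightarrow> (real \<Rightarrow> real) \<Rightarrow> (real \<Rightarrow> real) \<Rightarrow> (real \<Rightarrow> real) \<Rightarrow> bool" where
  "C2_on a b U U' U'' \<longleftrightarrow>
     (\<forall>y\<in>{a..b}. (U has_real_derivative U' y) (at y within {a..b})) \<and>
     (\<forall>y\<in>{a..b}. (U' has_real_derivative U'' y) (at y within {a..b})) \<and>
     continuous_on {a..b} U''"

text \<open>Sobolev space H^2(a,b) in one dimension: phi is differentiable on [a,b]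
  with derivative phi', and phi' is absolutely continuous with weak derivative
  phi'' in L^2(a,b) (i.e. phi' is the indefinite integral of an L^2 function).\<close>
definition H2_on :: "real \<Rightarrow> real \<Rightarrow> (real \<Rightarrow> real) \<Rightarrow> (real \<Rightarrow> real) \<Rightarrow> (real \<Rightarrow> real) \<Rightarrow> bool" where
  "H2_on a b \<phi> \<phi>' \<phi>'' \<longleftrightarrow>
     (\<forall>y\<in>{a..b}. (\<phi> has_real_derivative \<phi>' y) (at y within {a..b})) \<and>
     \<phi>'' absolutely_integrable_on {a..b} \<and>
     (\<lambda>y. (\<phi>'' y)^2) integrable_on {a..b} \<and>
     (\<forall>y\<in>{a..b}. \<phi>' y = \<phi>' a + integral {a..y} \<phi>'')"

definition critical_value_on :: "real \<Rightarrow> real \<Rightarrow> (real \<Rightarrow> real) \<Rightarrow> (real \<Rightarrow> real) \<Rightarrow> real \<Rightarrow> bool" where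
  "critical_value_on a b U' U c \<longleftrightarrow> (\<exists>y\<in>{a..b}. U' y = 0 \<and> U y = c)"

end

theory Submission
  imports Defs
begin
lemma AE_negligible:
  assumes "AE x in lborel. P x"
  shows "\<exists>N. negligible N \<and> (\<forall>x. x \<notin> N \<longrightarrow> P x)"
proof -
  obtain N where N: "N \<in> null_sets lborel" "{x. \<not> P x} \<subseteq> N"
    using assms unfolding eventually_ae_filter by auto
  have "negligible N"
    using N(1) by (simp add: negligible_iff_null_sets null_sets_completionI)
  then show ?thesis using N(2) by blast
qed

lemma AE_integral_le:
  fixes f g :: "real \<Rightarrow> real"
  assumes ae: "AE x in lborel. x \<in> {p..q} \<longrightarrow> f x \<le> g x"
    and fi: "f integrable_on {p..q}" and gi: "g integrable_on {p..q}"
  shows "integral {p..q} f \<le> integral {p..q} g"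
proof -
  obtain N where N: "negligible N" "\<And>x. x \<notin> N \<Longrightarrow> x \<in> {p..q} \<longrightarrow> f x \<le> g x"
    using AE_negligible[OF ae] by blast
  define f' where "f' x = (if x \<in> N then g x else f x)" for x
  have eq: "integral {p..q} f' = integral {p..q} f"
    by (rule integral_spike[OF N(1)]) (auto simp: f'_def)
  have fi': "f' integrable_on {p..q}"
    by (rule integrable_spike[OF fi N(1)]) (auto simp: f'_def)
  have "integral {p..q} f' \<le> integral {p..q} g"
    by (rule integral_le[OF fi' gi]) (use N(2) in \<open>auto simp: f'_def\<close>)
  then show ?thesis using eq by simp
qed

locale RK =
  fixes U U' U'' \<phi> \<phi>' \<phi>'' :: "real \<Rightarrow> real"
    and y1 y2 c \<alpha> \<beta> :: real
  assumes y12: "y1 < y2"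
    and U_C2: "C2_on y1 y2 U U' U''"
    and alpha_pos: "\<alpha> > 0"
    and phi_H2: "H2_on y1 y2 \<phi> \<phi>' \<phi>''"
    and phi_eq: "AE y in lborel. y \<in> {y1<..<y2} \<and> U y \<noteq> c \<longrightarrow>
                   - \<phi>'' y + \<alpha>^2 * \<phi> y - (\<beta> - U'' y) / (U y - c) * \<phi> y = 0"
    and bc1: "\<phi> y1 = 0" and bc2: "\<phi> y2 = 0"
    and finZ: "finite {y \<in> {y1..y2}. U y = c}"
    and cne1: "U y1 \<noteq> c" and cne2: "U y2 \<noteq> c"
    and noncrit: "\<And>y. y \<in> {y1..y2} \<Longrightarrow> U y = c \<Longrightarrow> U' y \<noteq> 0"
    and nonbeta: "\<And>y. y \<in> {y1..y2} \<Longrightarrow> U y = c \<Longrightarrow> \<beta> \<noteq> U'' y"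
    and lowv: "\<exists>t\<in>{y1..y2}. U t < c" and highv: "\<exists>t\<in>{y1..y2}. U t > c"
begin

lemma dU: "y \<in> {y1..y2} \<Longrightarrow> (U has_real_derivative U' y) (at y within {y1..y2})"
  using U_C2 by (auto simp: C2_on_def)
lemma dU': "y \<in> {y1..y2} \<Longrightarrow> (U' has_real_derivative U'' y) (at y within {y1..y2})"
  using U_C2 by (auto simp: C2_on_def)
lemma cU'': "continuous_on {y1..y2} U''"
  using U_C2 by (auto simp: C2_on_def)
lemma cU: "continuous_on {y1..y2} U"
  by (rule DERIV_continuous_on, erule dU)
lemma cU': "continuous_on {y1..y2} U'"
  by (rule DERIV_continuous_on, erule dU')
lemma dphi: "y \<in> {y1..y2} \<Longrightarrow> (\<phi> has_real_derivative \<phi>' y) (at y within {y1..y2})"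
  using phi_H2 unfolding H2_on_def by blast
lemma cphi: "continuous_on {y1..y2} \<phi>"
  by (rule DERIV_continuous_on, erule dphi)
lemma phi''_int: "\<phi>'' integrable_on {y1..y2}"
  using phi_H2 unfolding H2_on_def absolutely_integrable_on_def by blast
lemma phi'_rep: "y \<in> {y1..y2} \<Longrightarrow> \<phi>' y = \<phi>' y1 + integral {y1..y} \<phi>''"
  using phi_H2 unfolding H2_on_def by blast
lemma cphi': "continuous_on {y1..y2} \<phi>'"
proof -
  have "continuous_on {y1..y2} (\<lambda>y. \<phi>' y1 + integral {y1..y} \<phi>'')"
    by (rule continuous_on_add[OF continuous_on_const indefinite_integral_continuous_1[OF phi''_int]])
  then show ?thesis by (rule continuous_on_eq) (metis phi'_rep)
qed
lemma phi''_int_sub: "p \<in> {y1..y2} \<Longrightarrow> q \<in> {y1..y2} \<Longrightarrow> \<phi>'' integrable_on {p..q}"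
  by (rule integrable_on_subinterval[OF phi''_int]) auto
lemma phi'_diff: "p \<in> {y1..y2} \<Longrightarrow> x \<in> {y1..y2} \<Longrightarrow> p \<le> x \<Longrightarrow> \<phi>' x - \<phi>' p = integral {p..x} \<phi>''"
proof -
  assume a: "p \<in> {y1..y2}" "x \<in> {y1..y2}" "p \<le> x"
  have o: "y1 \<le> p" "p \<le> x" using a by auto
  have i: "\<phi>'' integrable_on {y1..x}" using a(2) y12 by (intro phi''_int_sub) auto
  have "integral {y1..p} \<phi>'' + integral {p..x} \<phi>'' = integral {y1..x} \<phi>''"
    by (rule Henstock_Kurzweil_Integration.integral_combine[OF o i])
  then show ?thesis using phi'_rep[OF a(1)] phi'_rep[OF a(2)] by linarith
qed

lemma bound_on: fixes f :: "real \<Rightarrow> real" assumes "continuous_on {y1..y2} f" shows "\<exists>B>0. \<forall>y\<in>{y1..y2}. \<bar>f y\<bar> \<le> B"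
proof -
  obtain B where "B \<ge> 0" "\<And>x. x \<in> {y1..y2} \<Longrightarrow> norm (f x) \<le> B"
    using continuous_on_compact_bound[OF compact_Icc assms] by blast
  then show ?thesis by (intro exI[of _ "B+1"]) (simp add: add_nonneg_pos, fastforce)
qed

lemma phi_lip: assumes "\<forall>y\<in>{y1..y2}. \<bar>\<phi>' y\<bar> \<le> B" "x \<in> {y1..y2}" "y \<in> {y1..y2}"
  shows "\<bar>\<phi> x - \<phi> y\<bar> \<le> B * \<bar>x - y\<bar>"
proof -
  have "norm (\<phi> x - \<phi> y) \<le> B * norm (x - y)"
    by (rule field_differentiable_bound[of "{y1..y2}" \<phi> \<phi>' B x y])
      (use assms dphi in \<open>simp_all add: convex_real_interval\<close>)
  then show ?thesis by simp
qed

end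

context RK begin

lemma local_zero:
  assumes p: "p \<in> {y1..y2}" and z0: "\<phi> p = 0" and z1: "\<phi>' p = 0" and C: "C > 0" and r: "r > 0"
    and ae: "AE t in lborel. t \<in> {y1..y2} \<and> \<bar>t - p\<bar> \<le> r \<and> t \<noteq> p \<longrightarrow> \<bar>\<phi>'' t\<bar> \<le> C * \<bar>\<phi> t\<bar> / \<bar>t - p\<bar>"
  shows "\<exists>e>0. \<forall>x\<in>{y1..y2}. \<bar>x - p\<bar> < e \<longrightarrow> \<phi> x = 0 \<and> \<phi>' x = 0"
proof -
  define \<rho> where "\<rho> = min r (1 / (2 * C))"
  have rho: "\<rho> > 0" "\<rho> \<le> r" "C * \<rho> \<le> 1/2" using C r by (auto simp: \<rho>_def min_def field_simps)
  define lo where "lo = max (p - \<rho>) y1"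
  define hi where "hi = min (p + \<rho>) y2"
  have J: "{lo..hi} \<subseteq> {y1..y2}" "p \<in> {lo..hi}" using p rho by (auto simp: lo_def hi_def)
  have Jr: "\<And>t. t \<in> {lo..hi} \<Longrightarrow> \<bar>t - p\<bar> \<le> \<rho>" by (auto simp: lo_def hi_def)
  have cJ: "continuous_on {lo..hi} (\<lambda>y. \<bar>\<phi>' y\<bar>)"
    using continuous_on_subset[OF cphi' J(1)] by (intro continuous_intros)
  have Jne: "{lo..hi} \<noteq> {}" using J(2) by blast
  obtain x0 where x0: "x0 \<in> {lo..hi}" "\<And>y. y \<in> {lo..hi} \<Longrightarrow> \<bar>\<phi>' y\<bar> \<le> \<bar>\<phi>' x0\<bar>"
    using continuous_attains_sup[OF compact_Icc Jne cJ] by blast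
  define S where "S = \<bar>\<phi>' x0\<bar>"
  have S0: "S \<ge> 0" by (simp add: S_def)
  have phib: "\<bar>\<phi> t\<bar> \<le> S * \<bar>t - p\<bar>" if "t \<in> {lo..hi}" for t
  proof -
    have "norm (\<phi> t - \<phi> p) \<le> S * norm (t - p)"
    proof (rule field_differentiable_bound[of "{lo..hi}" \<phi> \<phi>'])
      show "(\<phi> has_field_derivative \<phi>' z) (at z within {lo..hi})" if "z \<in> {lo..hi}" for z
        using dphi[of z] that J(1) by (auto intro: has_field_derivative_subset)
      show "norm (\<phi>' z) \<le> S" if "z \<in> {lo..hi}" for z using x0(2)[OF that] by (simp add: S_def)
    qed (use that J in \<open>auto simp: convex_real_interval\<close>)
    then show ?thesis using z0 by simp
  qed
  have ae2: "AE t in lborel. t \<in> {lo..hi} \<longrightarrow> \<bar>\<phi>'' t\<bar> \<le> C * S"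
    using ae AE_lborel_singleton[of p]
  proof eventually_elim
    case (elim t)
    show ?case
    proof
      assume t: "t \<in> {lo..hi}"
      then have "\<bar>\<phi>'' t\<bar> \<le> C * \<bar>\<phi> t\<bar> / \<bar>t - p\<bar>" using elim J Jr[OF t] rho by auto
      also have "\<dots> \<le> C * (S * \<bar>t - p\<bar>) / \<bar>t - p\<bar>"
        using phib[OF t] C by (intro divide_right_mono mult_left_mono) auto
      also have "\<dots> = C * S" using elim by simp
      finally show "\<bar>\<phi>'' t\<bar> \<le> C * S" .
    qed
  qed
  have intb: "\<bar>integral {u..v} \<phi>''\<bar> \<le> C * S * (v - u)" if "u \<in> {lo..hi}" "v \<in> {lo..hi}" "u \<le> v" for u v
  proof -
    have ui: "\<phi>'' integrable_on {u..v}" using that J by (intro phi''_int_sub) auto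
    have sub: "{u..v} \<subseteq> {lo..hi}" using that by auto
    have a1: "AE t in lborel. t \<in> {u..v} \<longrightarrow> \<phi>'' t \<le> C * S"
      using ae2 by eventually_elim (use sub in auto)
    have a2: "AE t in lborel. t \<in> {u..v} \<longrightarrow> - (C * S) \<le> \<phi>'' t"
      using ae2 by eventually_elim (use sub in auto)
    have "integral {u..v} \<phi>'' \<le> integral {u..v} (\<lambda>t. C * S)"
      by (rule AE_integral_le[OF a1 ui integrable_const_ivl])
    moreover have "integral {u..v} (\<lambda>t. - (C * S)) \<le> integral {u..v} \<phi>''"
      by (rule AE_integral_le[OF a2 integrable_const_ivl ui])
    ultimately show ?thesis using that by (simp add: abs_le_iff mult_ac)
  qed
  have phi'b: "\<bar>\<phi>' x\<bar> \<le> C * S * \<rho>" if x: "x \<in> {lo..hi}" for x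
  proof (cases "p \<le> x")
    case True
    have "\<phi>' x = integral {p..x} \<phi>''" using phi'_diff[of p x] z1 J x True by auto
    then have "\<bar>\<phi>' x\<bar> \<le> C * S * (x - p)" using intb[of p x] J x True by auto
    also have "\<dots> \<le> C * S * \<rho>" using Jr[OF x] C S0 True by (intro mult_left_mono) auto
    finally show ?thesis .
  next
    case False
    have "- \<phi>' x = integral {x..p} \<phi>''" using phi'_diff[of x p] z1 J x False by auto
    then have "\<bar>\<phi>' x\<bar> \<le> C * S * (p - x)" using intb[of x p] J x False by auto
    also have "\<dots> \<le> C * S * \<rho>" using Jr[OF x] C S0 False by (intro mult_left_mono) auto
    finally show ?thesis .
  qed
  have "S \<le> C * S * \<rho>" using phi'b[OF x0(1)] by (simp add: S_def)
  also have "\<dots> = S * (C * \<rho>)" by simp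
  also have "\<dots> \<le> S * (1/2)" using rho S0 by (intro mult_left_mono) auto
  finally have S00: "S = 0" using S0 by simp
  show ?thesis
  proof (rule exI[of _ \<rho>], rule conjI[OF rho(1)], intro ballI impI)
    fix x assume x: "x \<in> {y1..y2}" "\<bar>x - p\<bar> < \<rho>"
    then have xJ: "x \<in> {lo..hi}" by (auto simp: lo_def hi_def)
    show "\<phi> x = 0 \<and> \<phi>' x = 0" using phib[OF xJ] x0(2)[OF xJ] S00 by (simp add: S_def)
  qed
qed

end

context RK begin

lemma Ulow:
  assumes p: "p \<in> {y1..y2}" and Up: "U p = c"
  shows "\<exists>m>0. \<exists>d>0. \<forall>t\<in>{y1..y2}. \<bar>t - p\<bar> < d \<longrightarrow> m * \<bar>t - p\<bar> \<le> \<bar>U t - c\<bar>"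
proof -
  have nz: "U' p \<noteq> 0" using noncrit[OF p Up] .
  define m where "m = \<bar>U' p\<bar> / 2"
  have m: "m > 0" using nz by (simp add: m_def)
  have "((\<lambda>y. (U y - U p) / (y - p)) \<longlongrightarrow> U' p) (at p within {y1..y2})"
    using dU[OF p] by (simp add: has_field_derivative_iff)
  then have "eventually (\<lambda>y. dist ((U y - U p) / (y - p)) (U' p) < m) (at p within {y1..y2})"
    using m by (simp add: tendsto_iff)
  then obtain d where d: "d > 0" and hd: "\<forall>t\<in>{y1..y2}. t \<noteq> p \<and> dist t p < d \<longrightarrow>
      dist ((U t - U p) / (t - p)) (U' p) < m"
    unfolding eventually_at by blast
  show ?thesis
  proof (rule exI[of _ m], rule conjI[OF m], rule exI[of _ d], rule conjI[OF d], intro ballI impI)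
    fix t assume t: "t \<in> {y1..y2}" "\<bar>t - p\<bar> < d"
    show "m * \<bar>t - p\<bar> \<le> \<bar>U t - c\<bar>"
    proof (cases "t = p")
      case True then show ?thesis by simp
    next
      case False
      define q where "q = (U t - c) / (t - p)"
      have "dist q (U' p) < m" using hd t False by (simp add: q_def Up dist_real_def)
      then have qm: "\<bar>q\<bar> \<ge> m" by (simp add: dist_real_def m_def abs_if split: if_splits) 
      have "U t - c = q * (t - p)" using False by (simp add: q_def)
      then have "\<bar>U t - c\<bar> = \<bar>q\<bar> * \<bar>t - p\<bar>" by (simp add: abs_mult)
      then show ?thesis using qm by (simp add: mult_right_mono)
    qed
  qed
qed

lemma Kbound:
  assumes p: "p \<in> {y1..y2}"
  shows "\<exists>C>0. \<exists>r>0. \<forall>t\<in>{y1..y2}. \<bar>t - p\<bar> \<le> r \<and> t \<noteq> p \<and> U t \<noteq> c \<longrightarrow>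
           \<bar>(\<beta> - U'' t) / (U t - c)\<bar> \<le> C / \<bar>t - p\<bar>"
proof -
  have cb: "continuous_on {y1..y2} (\<lambda>t. \<beta> - U'' t)" using cU'' by (intro continuous_intros)
  obtain MB where MB: "MB > 0" "\<And>t. t \<in> {y1..y2} \<Longrightarrow> \<bar>\<beta> - U'' t\<bar> \<le> MB"
    using bound_on[OF cb] by blast
  show ?thesis
  proof (cases "U p = c")
    case True
    obtain m d where md: "m > 0" "d > 0" "\<And>t. t \<in> {y1..y2} \<Longrightarrow> \<bar>t - p\<bar> < d \<Longrightarrow> m * \<bar>t - p\<bar> \<le> \<bar>U t - c\<bar>"
      using Ulow[OF p True] by blast
    have pos: "MB / m > 0" "d / 2 > 0" using MB md by auto
    show ?thesis
    proof (rule exI[of _ "MB / m"], rule conjI[OF pos(1)], rule exI[of _ "d/2"], rule conjI[OF pos(2)], intro ballI impI)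
      fix t assume t: "t \<in> {y1..y2}" "\<bar>t - p\<bar> \<le> d / 2 \<and> t \<noteq> p \<and> U t \<noteq> c"
      have l: "m * \<bar>t - p\<bar> \<le> \<bar>U t - c\<bar>" using md(3)[OF t(1)] t(2) md(2) by auto
      have pos: "m * \<bar>t - p\<bar> > 0" using md(1) t(2) by auto
      have "\<bar>(\<beta> - U'' t) / (U t - c)\<bar> = \<bar>\<beta> - U'' t\<bar> / \<bar>U t - c\<bar>" by (simp add: abs_divide)
      also have "\<dots> \<le> MB / (m * \<bar>t - p\<bar>)"
        using MB(2)[OF t(1)] l pos by (intro frac_le) auto
      also have "\<dots> = MB / m / \<bar>t - p\<bar>" by simp
      finally show "\<bar>(\<beta> - U'' t) / (U t - c)\<bar> \<le> MB / m / \<bar>t - p\<bar>" .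
    qed
  next
    case False
    define m0 where "m0 = \<bar>U p - c\<bar> / 2"
    have m0: "m0 > 0" using False by (simp add: m0_def)
    obtain d where d: "d > 0" "\<And>t. t \<in> {y1..y2} \<Longrightarrow> dist t p < d \<Longrightarrow> dist (U t) (U p) < m0"
      using cU p m0 unfolding continuous_on_iff by blast
    define r where "r = d / 2"
    have r: "r > 0" "r < d" using d by (auto simp: r_def)
    have pos: "MB * r / m0 > 0" "r > 0" using MB r m0 by auto
    show ?thesis
    proof (rule exI[of _ "MB * r / m0"], rule conjI[OF pos(1)], rule exI[of _ r], rule conjI[OF pos(2)], intro ballI impI)
      fix t assume t: "t \<in> {y1..y2}" "\<bar>t - p\<bar> \<le> r \<and> t \<noteq> p \<and> U t \<noteq> c"
      have "dist (U t) (U p) < m0" using d(2)[OF t(1)] t(2) r by (simp add: dist_real_def)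
      then have l: "m0 \<le> \<bar>U t - c\<bar>" by (simp add: dist_real_def m0_def abs_if split: if_splits)
      have tp: "0 < \<bar>t - p\<bar>" "\<bar>t - p\<bar> \<le> r" using t(2) by auto
      have "\<bar>(\<beta> - U'' t) / (U t - c)\<bar> = \<bar>\<beta> - U'' t\<bar> / \<bar>U t - c\<bar>" by (simp add: abs_divide)
      also have "\<dots> \<le> MB / m0"
        using MB(2)[OF t(1)] l m0 by (intro frac_le) auto
      also have "\<dots> = MB * r / m0 / r" using r by simp
      also have "\<dots> \<le> MB * r / m0 / \<bar>t - p\<bar>"
        using tp MB m0 r by (intro divide_left_mono) auto
      finally show "\<bar>(\<beta> - U'' t) / (U t - c)\<bar> \<le> MB * r / m0 / \<bar>t - p\<bar>" .
    qed
  qed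
qed

lemma localAE:
  assumes p: "p \<in> {y1..y2}"
  shows "\<exists>C>0. \<exists>r>0. AE t in lborel. t \<in> {y1..y2} \<and> \<bar>t - p\<bar> \<le> r \<and> t \<noteq> p \<longrightarrow>
           \<bar>\<phi>'' t\<bar> \<le> C * \<bar>\<phi> t\<bar> / \<bar>t - p\<bar>"
proof -
  obtain C0 r where C0: "C0 > 0" "r > 0" and hK: "\<And>t. t \<in> {y1..y2} \<Longrightarrow> \<bar>t - p\<bar> \<le> r \<Longrightarrow> t \<noteq> p \<Longrightarrow> U t \<noteq> c \<Longrightarrow>
           \<bar>(\<beta> - U'' t) / (U t - c)\<bar> \<le> C0 / \<bar>t - p\<bar>"
    using Kbound[OF p] by blast
  have aeZ: "AE t in lborel. t \<notin> {y \<in> {y1..y2}. U y = c}"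
    by (rule AE_not_in[OF finite_imp_null_set_lborel[OF finZ]])
  have "AE t in lborel. t \<in> {y1..y2} \<and> \<bar>t - p\<bar> \<le> r \<and> t \<noteq> p \<longrightarrow>
           \<bar>\<phi>'' t\<bar> \<le> (\<alpha>^2 * r + C0) * \<bar>\<phi> t\<bar> / \<bar>t - p\<bar>"
    using phi_eq aeZ AE_lborel_singleton[of y1] AE_lborel_singleton[of y2]
  proof eventually_elim
    case (elim t)
    show ?case
    proof
      assume t: "t \<in> {y1..y2} \<and> \<bar>t - p\<bar> \<le> r \<and> t \<noteq> p"
      have tin: "t \<in> {y1<..<y2}" using t elim by auto
      have Ut: "U t \<noteq> c" using t elim by auto
      define K where "K = (\<beta> - U'' t) / (U t - c)"
      define D where "D = \<bar>t - p\<bar>"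
      have D: "D > 0" "D \<le> r" using t by (auto simp: D_def)
      have e: "\<phi>'' t = \<alpha>^2 * \<phi> t - K * \<phi> t" using elim(1) tin Ut by (simp add: K_def)
      have KD: "\<bar>K\<bar> * D \<le> C0" using hK[of t] t Ut D by (simp add: K_def D_def pos_le_divide_eq)
      have "\<bar>\<phi>'' t\<bar> * D \<le> (\<alpha>^2 * \<bar>\<phi> t\<bar> + \<bar>K\<bar> * \<bar>\<phi> t\<bar>) * D"
        using e D by (intro mult_right_mono) (auto simp: abs_mult intro: order_trans[OF abs_triangle_ineq4])
      also have "\<dots> = \<alpha>^2 * \<bar>\<phi> t\<bar> * D + (\<bar>K\<bar> * D) * \<bar>\<phi> t\<bar>" by (simp add: algebra_simps)
      also have "\<dots> \<le> \<alpha>^2 * \<bar>\<phi> t\<bar> * r + C0 * \<bar>\<phi> t\<bar>"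
        using D KD by (intro add_mono mult_left_mono mult_right_mono) auto
      also have "\<dots> = (\<alpha>^2 * r + C0) * \<bar>\<phi> t\<bar>" by (simp add: algebra_simps)
      finally show "\<bar>\<phi>'' t\<bar> \<le> (\<alpha>^2 * r + C0) * \<bar>\<phi> t\<bar> / \<bar>t - p\<bar>"
        using D by (simp add: D_def pos_le_divide_eq)
    qed
  qed
  moreover have "\<alpha>^2 * r + C0 > 0" using C0 by (simp add: add_nonneg_pos)
  ultimately show ?thesis using C0(2) by blast
qed

lemma local_open:
  assumes p: "p \<in> {y1..y2}" and "\<phi> p = 0" "\<phi>' p = 0"
  shows "\<exists>e>0. \<forall>x\<in>{y1..y2}. \<bar>x - p\<bar> < e \<longrightarrow> \<phi> x = 0 \<and> \<phi>' x = 0"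
proof -
  obtain C r where "C > 0" "r > 0" "AE t in lborel. t \<in> {y1..y2} \<and> \<bar>t - p\<bar> \<le> r \<and> t \<noteq> p \<longrightarrow>
           \<bar>\<phi>'' t\<bar> \<le> C * \<bar>\<phi> t\<bar> / \<bar>t - p\<bar>"
    using localAE[OF p] by blast
  then show ?thesis using local_zero[OF p assms(2,3)] by blast
qed

end

context RK begin

lemma phi_zero_crit:
  assumes z: "z \<in> {y1..y2}" and Uz: "U z = c"
  shows "\<phi> z = 0"
proof (rule ccontr)
  assume phz: "\<phi> z \<noteq> 0"
  have zin: "y1 < z" "z < y2" using z Uz cne1 cne2 by (auto simp: le_less)
  have nz: "U' z \<noteq> 0" using noncrit[OF z Uz] .
  have nb: "\<beta> - U'' z \<noteq> 0" using nonbeta[OF z Uz] by simp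
  define L where "L = (\<beta> - U'' z) * \<phi> z * (1 / U' z)"
  have L0: "L \<noteq> 0" using nz nb phz by (simp add: L_def)
  define g where "g t = (\<beta> - U'' t) * \<phi> t * (1 / ((U t - c) / (t - z)))" for t
  have q: "((\<lambda>t. (U t - c) / (t - z)) \<longlongrightarrow> U' z) (at z within {y1..y2})"
    using dU[OF z] Uz by (simp add: has_field_derivative_iff)
  have t1: "((\<lambda>t. \<beta> - U'' t) \<longlongrightarrow> \<beta> - U'' z) (at z within {y1..y2})"
    using cU'' z unfolding continuous_on_def by (intro tendsto_intros) auto
  have t2: "(\<phi> \<longlongrightarrow> \<phi> z) (at z within {y1..y2})"
    using cphi z unfolding continuous_on_def by auto
  have gl: "(g \<longlongrightarrow> L) (at z within {y1..y2})"
    unfolding g_def[abs_def] L_def by (intro tendsto_mult t1 t2 tendsto_divide tendsto_const q nz)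
  have "eventually (\<lambda>t. dist (g t) L < \<bar>L\<bar> / 2) (at z within {y1..y2})"
    using tendsto_iff[THEN iffD1, rule_format, OF gl, of "\<bar>L\<bar> / 2"] L0 by simp
  then obtain d where d: "d > 0" and hd: "\<forall>t\<in>{y1..y2}. t \<noteq> z \<and> dist t z < d \<longrightarrow> dist (g t) L < \<bar>L\<bar> / 2"
    unfolding eventually_at by blast
  define s where "s = sgn L"
  have s: "\<bar>s\<bar> = 1" "s * L = \<bar>L\<bar>" using L0 by (auto simp: s_def sgn_if)
  define \<delta> where "\<delta> = min (d / 2) ((y2 - z) / 2)"
  have \<delta>: "\<delta> > 0" "\<delta> < d" "z + \<delta> < y2" using d zin by (simp_all add: \<delta>_def min_def field_simps)
  define w where "w = z + \<delta>"
  obtain B\<phi> where B\<phi>: "B\<phi> > 0" "\<And>t. t \<in> {y1..y2} \<Longrightarrow> \<bar>\<phi> t\<bar> \<le> B\<phi>" using bound_on[OF cphi] by blast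
  obtain Bp where Bp: "Bp > 0" "\<And>t. t \<in> {y1..y2} \<Longrightarrow> \<bar>\<phi>' t\<bar> \<le> Bp" using bound_on[OF cphi'] by blast
  have sg: "s * g t \<ge> \<bar>L\<bar> / 2" if t: "z < t" "t \<le> w" for t
  proof -
    have "t \<in> {y1..y2}" "t \<noteq> z" "dist t z < d" using t zin \<delta> by (auto simp: w_def dist_real_def)
    then have "\<bar>g t - L\<bar> < \<bar>L\<bar> / 2" using hd by (auto simp: dist_real_def)
    moreover have "s * g t = \<bar>L\<bar> + s * (g t - L)" using s by (simp add: algebra_simps)
    moreover have "\<bar>s * (g t - L)\<bar> = \<bar>g t - L\<bar>" using s by (simp add: abs_mult)
    ultimately show ?thesis by linarith
  qed
  have Unz: "U t \<noteq> c" if t: "z < t" "t \<le> w" for t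
  proof
    assume "U t = c"
    then have "g t = 0" by (simp add: g_def)
    then show False using sg[OF t] L0 s by simp
  qed
  have key: "s * (\<phi>' w - \<phi>' y) \<le> \<alpha>^2 * B\<phi> * (w - y) - (\<bar>L\<bar> / 2) * (ln (w - z) - ln (y - z))"
    if y: "z < y" "y \<le> w" for y
  proof -
    have yin: "y \<in> {y1..y2}" "w \<in> {y1..y2}" using y zin \<delta> by (auto simp: w_def)
    define F where "F t = \<alpha>^2 * B\<phi> * t - (\<bar>L\<bar> / 2) * ln (t - z)" for t
    define f where "f t = \<alpha>^2 * B\<phi> - (\<bar>L\<bar> / 2) * (1 / (t - z))" for t
    have Fi: "(f has_integral (F w - F y)) {y..w}"
    proof (rule fundamental_theorem_of_calculus[OF y(2)])
      fix t assume t: "t \<in> {y..w}"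
      then have tz: "t - z > 0" using y by auto
      have "(F has_real_derivative f t) (at t within {y..w})"
        unfolding F_def f_def using tz
        by (auto intro!: derivative_eq_intros simp: field_simps)
      then show "(F has_vector_derivative f t) (at t within {y..w})"
        by (simp add: has_real_derivative_iff_has_vector_derivative)
    qed
    have pi: "\<phi>'' integrable_on {y..w}" using yin by (intro phi''_int_sub)
    have ae: "AE t in lborel. t \<in> {y..w} \<longrightarrow> s * \<phi>'' t \<le> f t"
      using phi_eq AE_lborel_singleton[of w]
    proof eventually_elim
      case (elim t)
      show ?case
      proof
        assume t: "t \<in> {y..w}"
        then have tz: "z < t" "t \<le> w" using y by auto
        have tin: "t \<in> {y1<..<y2}" using tz zin \<delta> by (auto simp: w_def)
        have Ut: "U t \<noteq> c" using Unz[OF tz] .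
        have tz0: "t - z \<noteq> 0" "U t - c \<noteq> 0" using tz Ut by auto
        have gK: "g t / (t - z) = (\<beta> - U'' t) / (U t - c) * \<phi> t"
        proof -
          have "g t = (\<beta> - U'' t) * \<phi> t * ((t - z) / (U t - c))" by (simp add: g_def)
          then have "g t / (t - z) = (\<beta> - U'' t) * \<phi> t * ((t - z) / (U t - c)) / (t - z)" by simp
          also have "\<dots> = (\<beta> - U'' t) * \<phi> t / (U t - c)" using tz0 by simp
          finally show ?thesis by simp
        qed
        have e0: "- \<phi>'' t + \<alpha>^2 * \<phi> t - (\<beta> - U'' t) / (U t - c) * \<phi> t = 0"
          using elim(1) tin Ut by blast
        have e: "\<phi>'' t = \<alpha>^2 * \<phi> t - g t / (t - z)"
          using e0 gK by linarith
        have "s * \<phi>'' t = s * (\<alpha>^2 * \<phi> t) - (s * g t) / (t - z)" unfolding e by (simp add: right_diff_distrib)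
        also have "s * (\<alpha>^2 * \<phi> t) \<le> \<alpha>^2 * B\<phi>"
        proof -
          have "s * (\<alpha>^2 * \<phi> t) \<le> \<bar>s * (\<alpha>^2 * \<phi> t)\<bar>" by simp
          also have "\<dots> = \<alpha>^2 * \<bar>\<phi> t\<bar>" using s by (simp add: abs_mult)
          also have "\<dots> \<le> \<alpha>^2 * B\<phi>" using B\<phi>(2)[of t] tin by (intro mult_left_mono) auto
          finally show ?thesis .
        qed
        moreover have "(\<bar>L\<bar> / 2) * (1 / (t - z)) \<le> (s * g t) / (t - z)"
        proof -
          have "(\<bar>L\<bar> / 2) * (1 / (t - z)) = (\<bar>L\<bar> / 2) / (t - z)" by simp
          also have "\<dots> \<le> (s * g t) / (t - z)" using sg[OF tz] tz by (intro divide_right_mono) auto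
          finally show ?thesis .
        qed
        ultimately show "s * \<phi>'' t \<le> f t" by (simp add: f_def)
      qed
    qed
    have "integral {y..w} (\<lambda>t. s * \<phi>'' t) \<le> integral {y..w} f"
      by (rule AE_integral_le[OF ae]) (use integrable_cmul[OF pi, of s] in simp, rule has_integral_integrable[OF Fi])
    moreover have "integral {y..w} (\<lambda>t. s * \<phi>'' t) = s * (\<phi>' w - \<phi>' y)"
      using phi'_diff[of y w] yin y by simp
    moreover have "integral {y..w} f = F w - F y" using Fi by (rule integral_unique)
    ultimately show ?thesis by (simp add: F_def algebra_simps)
  qed
  define T where "T = 2 * (\<alpha>^2 * B\<phi> * \<delta> + 2 * Bp + 1) / \<bar>L\<bar>"
  have T: "T > 0" using L0 B\<phi> Bp \<delta> by (auto simp: T_def intro!: divide_pos_pos add_nonneg_pos)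
  define y where "y = z + \<delta> * exp (- T)"
  have ey: "exp (- T) < 1" using T by simp
  have y: "z < y" "y \<le> w" using \<delta> ey by (auto simp: y_def w_def mult_less_cancel_left1 less_imp_le)
  have lny: "ln (y - z) = ln \<delta> - T" using \<delta> by (simp add: y_def ln_mult)
  have lnw: "ln (w - z) = ln \<delta>" by (simp add: w_def)
  have yin: "y \<in> {y1..y2}" "w \<in> {y1..y2}" using y zin \<delta> by (auto simp: w_def)
  have "- (2 * Bp) \<le> s * (\<phi>' w - \<phi>' y)"
  proof -
    have "\<bar>s * (\<phi>' w - \<phi>' y)\<bar> \<le> 2 * Bp"
      using Bp(2)[OF yin(1)] Bp(2)[OF yin(2)] s by (simp add: abs_mult)
    then show ?thesis by linarith
  qed
  also have "\<dots> \<le> \<alpha>^2 * B\<phi> * (w - y) - (\<bar>L\<bar> / 2) * T"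
    using key[OF y] lny lnw by simp
  also have "\<alpha>^2 * B\<phi> * (w - y) \<le> \<alpha>^2 * B\<phi> * \<delta>"
    using y B\<phi> by (intro mult_left_mono) (auto simp: w_def)
  finally have "(\<bar>L\<bar> / 2) * T \<le> \<alpha>^2 * B\<phi> * \<delta> + 2 * Bp" by simp
  moreover have "(\<bar>L\<bar> / 2) * T = \<alpha>^2 * B\<phi> * \<delta> + 2 * Bp + 1" using L0 by (simp add: T_def)
  ultimately show False by simp
qed

end

context RK begin

lemma Flim:
  assumes q: "q \<in> {y1..y2}" and phq: "\<phi> q = 0"
  shows "((\<lambda>t. \<phi> t * (\<phi>' t - U' t * \<phi> t / (U t - c))) \<longlongrightarrow> 0) (at q within {y1..y2})"
proof (cases "U q = c")
  case False
  have c1: "(\<phi> \<longlongrightarrow> \<phi> q) (at q within {y1..y2})" using cphi q unfolding continuous_on_def by blast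
  have c2: "(\<phi>' \<longlongrightarrow> \<phi>' q) (at q within {y1..y2})" using cphi' q unfolding continuous_on_def by blast
  have c3: "(U' \<longlongrightarrow> U' q) (at q within {y1..y2})" using cU' q unfolding continuous_on_def by blast
  have c4: "(U \<longlongrightarrow> U q) (at q within {y1..y2})" using cU q unfolding continuous_on_def by blast
  have "((\<lambda>t. \<phi> t * (\<phi>' t - U' t * \<phi> t / (U t - c))) \<longlongrightarrow> \<phi> q * (\<phi>' q - U' q * \<phi> q / (U q - c))) (at q within {y1..y2})"
    using False by (intro tendsto_intros c1 c2 c3 c4) auto
  then show ?thesis using phq by simp
next
  case True
  obtain m d where md: "m > 0" "d > 0" "\<And>t. t \<in> {y1..y2} \<Longrightarrow> \<bar>t - q\<bar> < d \<Longrightarrow> m * \<bar>t - q\<bar> \<le> \<bar>U t - c\<bar>"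
    using Ulow[OF q True] by blast
  obtain Bp where Bp: "Bp > 0" "\<And>t. t \<in> {y1..y2} \<Longrightarrow> \<bar>\<phi>' t\<bar> \<le> Bp" using bound_on[OF cphi'] by blast
  obtain BU where BU: "BU > 0" "\<And>t. t \<in> {y1..y2} \<Longrightarrow> \<bar>U' t\<bar> \<le> BU" using bound_on[OF cU'] by blast
  define K where "K = Bp * Bp + BU * (Bp * Bp) / m"
  have ev: "eventually (\<lambda>t. norm (\<phi> t * (\<phi>' t - U' t * \<phi> t / (U t - c))) \<le> K * \<bar>t - q\<bar>) (at q within {y1..y2})"
    unfolding eventually_at
  proof (rule exI[of _ d], rule conjI[OF md(2)], intro ballI impI)
    fix t assume t: "t \<in> {y1..y2}" "t \<noteq> q \<and> dist t q < d"
    define e where "e = \<bar>t - q\<bar>"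
    have e: "e > 0" "e < d" using t by (auto simp: e_def dist_real_def)
    have A: "\<bar>\<phi> t\<bar> \<le> Bp * e" using phi_lip[of Bp t q] Bp(2) t q phq by (simp add: e_def)
    have D: "m * e \<le> \<bar>U t - c\<bar>" using md(3)[OF t(1)] e by (simp add: e_def)
    have me: "m * e > 0" using md e by simp
    have P: "\<bar>\<phi>' t\<bar> \<le> Bp" "\<bar>U' t\<bar> \<le> BU" using Bp(2)[OF t(1)] BU(2)[OF t(1)] by auto
    have "norm (\<phi> t * (\<phi>' t - U' t * \<phi> t / (U t - c))) \<le> \<bar>\<phi> t\<bar> * \<bar>\<phi>' t\<bar> + \<bar>U' t\<bar> * (\<bar>\<phi> t\<bar> * \<bar>\<phi> t\<bar>) / \<bar>U t - c\<bar>"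
    proof -
      have "\<phi> t * (\<phi>' t - U' t * \<phi> t / (U t - c)) = \<phi> t * \<phi>' t - U' t * (\<phi> t * \<phi> t) / (U t - c)"
        by (simp add: algebra_simps)
      moreover have "\<bar>\<phi> t * \<phi>' t - U' t * (\<phi> t * \<phi> t) / (U t - c)\<bar> \<le> \<bar>\<phi> t * \<phi>' t\<bar> + \<bar>U' t * (\<phi> t * \<phi> t) / (U t - c)\<bar>"
        by (rule abs_triangle_ineq4)
      moreover have "\<bar>U' t * (\<phi> t * \<phi> t) / (U t - c)\<bar> = \<bar>U' t\<bar> * (\<bar>\<phi> t\<bar> * \<bar>\<phi> t\<bar>) / \<bar>U t - c\<bar>"
        by (simp add: abs_mult abs_divide)
      ultimately show ?thesis by (simp add: abs_mult)
    qed
    also have "\<dots> \<le> (Bp * e) * Bp + BU * ((Bp * e) * (Bp * e)) / (m * e)"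
    proof (rule add_mono)
      show "\<bar>\<phi> t\<bar> * \<bar>\<phi>' t\<bar> \<le> Bp * e * Bp" using A P by (intro mult_mono) auto
      show "\<bar>U' t\<bar> * (\<bar>\<phi> t\<bar> * \<bar>\<phi> t\<bar>) / \<bar>U t - c\<bar> \<le> BU * (Bp * e * (Bp * e)) / (m * e)"
        using A P D me by (intro frac_le mult_mono) auto
    qed
    also have "\<dots> = K * e" using me e md by (simp add: K_def field_simps)
    finally show "norm (\<phi> t * (\<phi>' t - U' t * \<phi> t / (U t - c))) \<le> K * \<bar>t - q\<bar>" by (simp add: e_def)
  qed
  have "((\<lambda>t. K * \<bar>t - q\<bar>) \<longlongrightarrow> K * \<bar>q - q\<bar>) (at q within {y1..y2})"
    by (intro tendsto_intros)
  then have "((\<lambda>t. K * \<bar>t - q\<bar>) \<longlongrightarrow> 0) (at q within {y1..y2})" by simp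
  then show ?thesis by (rule Lim_null_comparison[OF ev])
qed

lemma phi2:
  assumes ab: "y1 \<le> a" "b \<le> y2" "a < y" "y < b" and nz: "\<forall>t\<in>{a<..<b}. U t \<noteq> c"
  shows "(\<phi>' has_real_derivative (\<alpha>^2 * \<phi> y - (\<beta> - U'' y) / (U y - c) * \<phi> y)) (at y)"
proof -
  define p where "p = (a + y) / 2"
  define q where "q = (y + b) / 2"
  have pq: "a < p" "p < y" "y < q" "q < b" using ab by (auto simp: p_def q_def)
  define h where "h t = \<alpha>^2 * \<phi> t - (\<beta> - U'' t) / (U t - c) * \<phi> t" for t
  have sub: "{p..q} \<subseteq> {y1..y2}" using pq ab by auto
  have nz': "\<forall>t\<in>{p..q}. U t - c \<noteq> 0" using nz pq by auto
  have ch: "continuous_on {p..q} h"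
    unfolding h_def
    using continuous_on_subset[OF cphi sub] continuous_on_subset[OF cU'' sub] continuous_on_subset[OF cU sub] nz'
    by (intro continuous_intros) auto
  have ieq: "integral {p..x} \<phi>'' = integral {p..x} h" if x: "x \<in> {p..q}" for x
  proof -
    have s2: "{p..x} \<subseteq> {p..q}" using x by auto
    have i1: "\<phi>'' integrable_on {p..x}" using x sub by (intro phi''_int_sub) auto
    have i2: "h integrable_on {p..x}" by (rule integrable_continuous_interval[OF continuous_on_subset[OF ch s2]])
    have ae: "AE t in lborel. t \<in> {p..x} \<longrightarrow> \<phi>'' t = h t"
      using phi_eq
    proof eventually_elim
      case (elim t)
      show ?case
      proof
        assume t: "t \<in> {p..x}"
        then have "t \<in> {y1<..<y2}" "U t \<noteq> c" using x pq ab nz by auto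
        then show "\<phi>'' t = h t" using elim unfolding h_def by linarith
      qed
    qed
    have "integral {p..x} \<phi>'' \<le> integral {p..x} h"
      by (rule AE_integral_le[OF _ i1 i2]) (use ae in \<open>auto elim: eventually_mono\<close>)
    moreover have "integral {p..x} h \<le> integral {p..x} \<phi>''"
      by (rule AE_integral_le[OF _ i2 i1]) (use ae in \<open>auto elim: eventually_mono\<close>)
    ultimately show ?thesis by linarith
  qed
  have rep: "\<phi>' x = \<phi>' p + integral {p..x} h" if x: "x \<in> {p<..<q}" for x
  proof -
    have "\<phi>' x - \<phi>' p = integral {p..x} \<phi>''" using x sub by (intro phi'_diff) auto
    then show ?thesis using ieq[of x] x by auto
  qed
  have "((\<lambda>u. integral {p..u} h) has_vector_derivative h y) (at y within {p..q})"
    using pq by (intro integral_has_vector_derivative ch) auto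
  then have "((\<lambda>u. integral {p..u} h) has_real_derivative h y) (at y)"
    using pq by (simp add: at_within_Icc_at has_real_derivative_iff_has_vector_derivative)
  then have "((\<lambda>u. \<phi>' p + integral {p..u} h) has_real_derivative h y) (at y)"
    by (auto intro!: derivative_eq_intros)
  then have "(\<phi>' has_real_derivative h y) (at y)"
    by (rule has_field_derivative_transform_within_open[of _ _ _ "{p<..<q}"]) (use pq rep in auto)
  then show ?thesis by (simp add: h_def)
qed

end

lemma energy_alg:
  fixes D p p1 u1 u2 a2 \<beta> :: real
  assumes "D \<noteq> 0"
  shows "p1 * (p1 - u1 * p / D) + p * ((a2 * p - (\<beta> - u2) / D * p) - ((u2 * p + u1 * p1) * D - u1 * p * u1) / (D * D))
       = (p1 - u1 * p / D)^2 + a2 * p^2 - \<beta> * p^2 / D"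
proof -
  have e1: "(\<beta> - u2) / D * p = \<beta> * p / D - u2 * p / D" by (simp add: diff_divide_distrib left_diff_distrib)
  have e2: "((u2 * p + u1 * p1) * D - u1 * p * u1) / (D * D) = u2 * p / D + u1 * p1 / D - u1 * u1 * p / (D * D)"
    using assms by (simp add: diff_divide_distrib add_divide_distrib)
  have e3: "(p1 - u1 * p / D)^2 = p1 * p1 - 2 * (u1 * p * p1 / D) + u1 * u1 * p * p / (D * D)"
    by (simp add: power2_eq_square algebra_simps)
  show ?thesis unfolding e1 e2 e3 by (simp add: algebra_simps power2_eq_square)
qed

context RK begin

lemma energy:
  assumes ab: "y1 \<le> a" "a < b" "b \<le> y2"
    and sgn: "\<forall>t\<in>{a<..<b}. U t \<noteq> c \<and> \<beta> * (U t - c) \<le> 0"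
    and pa: "\<phi> a = 0" and pb: "\<phi> b = 0"
  shows "\<forall>t\<in>{a<..<b}. \<phi> t = 0"
proof -
  define F where "F t = \<phi> t * (\<phi>' t - U' t * \<phi> t / (U t - c))" for t
  define G where "G t = (\<phi>' t - U' t * \<phi> t / (U t - c))^2 + \<alpha>^2 * (\<phi> t)^2 - \<beta> * (\<phi> t)^2 / (U t - c)" for t
  have nz: "\<forall>t\<in>{a<..<b}. U t \<noteq> c" using sgn by blast
  have dF: "(F has_real_derivative G y) (at y)" if y: "y \<in> {a<..<b}" for y
  proof -
    have yy: "y1 < y" "y < y2" using y ab by auto
    have d1: "(\<phi> has_real_derivative \<phi>' y) (at y)" using dphi[of y] yy by (simp add: at_within_Icc_at)
    have d2: "(\<phi>' has_real_derivative (\<alpha>^2 * \<phi> y - (\<beta> - U'' y) / (U y - c) * \<phi> y)) (at y)"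
      using phi2[of a b y] ab y nz by auto
    have d3: "(U has_real_derivative U' y) (at y)" using dU[of y] yy by (simp add: at_within_Icc_at)
    have d4: "(U' has_real_derivative U'' y) (at y)" using dU'[of y] yy by (simp add: at_within_Icc_at)
    have Uy: "U y - c \<noteq> 0" using nz y by auto
    have "(F has_real_derivative
        (\<phi>' y * (\<phi>' y - U' y * \<phi> y / (U y - c)) +
         \<phi> y * ((\<alpha>^2 * \<phi> y - (\<beta> - U'' y) / (U y - c) * \<phi> y) -
           ((U'' y * \<phi> y + U' y * \<phi>' y) * (U y - c) - U' y * \<phi> y * U' y) / ((U y - c) * (U y - c))))) (at y)"
      unfolding F_def
      by (rule derivative_eq_intros d1 d2 d3 d4 refl | use Uy in simp)+
    moreover have "(\<phi>' y * (\<phi>' y - U' y * \<phi> y / (U y - c)) +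
         \<phi> y * ((\<alpha>^2 * \<phi> y - (\<beta> - U'' y) / (U y - c) * \<phi> y) -
           ((U'' y * \<phi> y + U' y * \<phi>' y) * (U y - c) - U' y * \<phi> y * U' y) / ((U y - c) * (U y - c)))) = G y"
      unfolding G_def by (rule energy_alg[OF Uy])
    ultimately show ?thesis by simp
  qed
  have Gnn: "G y \<ge> \<alpha>^2 * (\<phi> y)^2" if y: "y \<in> {a<..<b}" for y
  proof -
    have s: "\<beta> * (U y - c) \<le> 0" "U y - c \<noteq> 0" using sgn y by auto
    have "\<beta> / (U y - c) \<le> 0"
    proof (cases "U y - c > 0")
      case True then have "\<beta> \<le> 0" using s by (simp add: mult_le_0_iff)
      then show ?thesis using True by (simp add: divide_nonpos_pos)
    next
      case False then have "U y - c < 0" using s by simp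
      then have "\<beta> \<ge> 0" using s by (simp add: mult_le_0_iff)
      then show ?thesis using \<open>U y - c < 0\<close> by (simp add: divide_nonneg_neg)
    qed
    then have m: "(\<beta> / (U y - c)) * (\<phi> y)^2 \<le> 0" by (rule mult_nonpos_nonneg) simp
    have "\<beta> * (\<phi> y)^2 / (U y - c) = (\<beta> / (U y - c)) * (\<phi> y)^2" by simp
    then have "\<beta> * (\<phi> y)^2 / (U y - c) \<le> 0" using m by linarith
    moreover have "(\<phi>' y - U' y * \<phi> y / (U y - c))^2 \<ge> 0" by simp
    ultimately show ?thesis unfolding G_def by linarith
  qed
  have mono: "F s \<le> F t" if st: "s \<in> {a<..<b}" "t \<in> {a<..<b}" "s \<le> t" for s t
  proof (rule DERIV_nonneg_imp_increasing_open[OF st(3)])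
    fix x assume x: "s < x" "x < t"
    then have "x \<in> {a<..<b}" using st by auto
    then show "\<exists>y. (F has_real_derivative y) (at x) \<and> 0 \<le> y"
    proof -
      have "0 \<le> \<alpha>^2 * (\<phi> x)^2" by simp
      then have "0 \<le> G x" using Gnn[OF \<open>x \<in> {a<..<b}\<close>] by linarith
      then show ?thesis using dF[OF \<open>x \<in> {a<..<b}\<close>] by blast
    qed
  next
    show "continuous_on {s..t} F"
    proof (rule continuous_at_imp_continuous_on, rule ballI)
      fix x assume "x \<in> {s..t}"
      then have "x \<in> {a<..<b}" using st by auto
      then show "isCont F x" using dF DERIV_isCont by blast
    qed
  qed
  have la: "(F \<longlongrightarrow> 0) (at a within {y1..y2})" unfolding F_def using Flim[of a] pa ab by auto
  have lb: "(F \<longlongrightarrow> 0) (at b within {y1..y2})" unfolding F_def using Flim[of b] pb ab by auto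
  have F0: "F y = 0" if y: "y \<in> {a<..<b}" for y
  proof -
    have ay: "a < y" "y < b" using y by auto
    have s1: "{a<..<y} \<subseteq> {y1..y2}" "{y<..<b} \<subseteq> {y1..y2}" using ab ay by auto
    have nt1: "\<not> trivial_limit (at a within {a<..<y})"
      using ay by (simp add: at_within_eq_bot_iff)
    have nt2: "\<not> trivial_limit (at b within {y<..<b})"
      using ay by (simp add: at_within_eq_bot_iff)
    have e1: "eventually (\<lambda>s. F s \<le> F y) (at a within {a<..<y})"
      unfolding eventually_at
      by (rule exI[of _ 1]) (use mono y ay in \<open>auto\<close>)
    have e2: "eventually (\<lambda>s. F y \<le> F s) (at b within {y<..<b})"
      unfolding eventually_at
      by (rule exI[of _ 1]) (use mono y ay in \<open>auto\<close>)
    have "0 \<le> F y"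
      by (rule tendsto_upperbound[OF tendsto_within_subset[OF la s1(1)] e1 nt1])
    moreover have "F y \<le> 0"
      by (rule tendsto_lowerbound[OF tendsto_within_subset[OF lb s1(2)] e2 nt2])
    ultimately show ?thesis by simp
  qed
  show ?thesis
  proof
    fix y assume y: "y \<in> {a<..<b}"
    have "(F has_real_derivative 0) (at y)"
      by (rule has_field_derivative_transform_within_open[OF DERIV_const _ y]) (use F0 in auto)
    then have "G y = 0" using dF[OF y] DERIV_unique by blast
    then have "\<alpha>^2 * (\<phi> y)^2 \<le> 0" using Gnn[OF y] by simp
    then show "\<phi> y = 0" using alpha_pos by (simp add: mult_le_0_iff)
  qed
qed

end

context RK begin

lemma exists_zero_interval: "\<exists>m\<in>{y1..y2}. \<phi> m = 0 \<and> \<phi>' m = 0"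
proof -
  define Z where "Z = {y \<in> {y1..y2}. U y = c}"
  have fZ: "finite Z" using finZ by (simp add: Z_def)
  obtain t where t: "t \<in> {y1..y2}" "U t \<noteq> c" "\<beta> * (U t - c) \<le> 0"
  proof (cases "\<beta> \<ge> 0")
    case True
    obtain t where "t \<in> {y1..y2}" "U t < c" using lowv by blast
    then show ?thesis using True that[of t] by (simp add: mult_nonneg_nonpos)
  next
    case False
    obtain t where "t \<in> {y1..y2}" "U t > c" using highv by blast
    then show ?thesis using False that[of t] by (simp add: mult_nonpos_nonneg)
  qed
  define A where "A = insert y1 {z \<in> Z. z < t}"
  define B where "B = insert y2 {z \<in> Z. t < z}"
  have fA: "finite A" "A \<noteq> {}" using fZ by (auto simp: A_def)
  have fB: "finite B" "B \<noteq> {}" using fZ by (auto simp: B_def)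
  define a where "a = Max A"
  define b where "b = Min B"
  have aA: "a \<in> A" using fA by (simp add: a_def)
  have bB: "b \<in> B" using fB by (simp add: b_def)
  have a_ge: "\<And>x. x \<in> A \<Longrightarrow> x \<le> a" using fA by (simp add: a_def)
  have b_le: "\<And>x. x \<in> B \<Longrightarrow> b \<le> x" using fB by (simp add: b_def)
  have at: "a \<le> t" using aA t(1) by (auto simp: A_def)
  have tb: "t \<le> b" using bB t(1) by (auto simp: B_def)
  have ya: "y1 \<le> a" using a_ge[of y1] by (simp add: A_def)
  have by2: "b \<le> y2" using b_le[of y2] by (simp add: B_def)
  have ab: "a < b"
  proof (rule ccontr)
    assume "\<not> a < b"
    then have "a = t" "b = t" using at tb by auto
    then have "t = y1" "t = y2" using aA bB by (auto simp: A_def B_def)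
    then show False using y12 by simp
  qed
  have noZ: "U s \<noteq> c" if s: "s \<in> {a<..<b}" for s
  proof
    assume Us: "U s = c"
    then have sZ: "s \<in> Z" using s ya by2 by (auto simp: Z_def)
    consider "s < t" | "s = t" | "t < s" by linarith
    then show False
    proof cases
      case 1 then have "s \<in> A" using sZ by (simp add: A_def)
      then show False using a_ge[of s] s by auto
    next
      case 2 then show False using Us t(2) by simp
    next
      case 3 then have "s \<in> B" using sZ by (simp add: B_def)
      then show False using b_le[of s] s by auto
    qed
  qed
  have sgn: "\<beta> * (U s - c) \<le> 0" if s: "s \<in> {a<..<b}" for s
  proof (rule ccontr)
    assume "\<not> \<beta> * (U s - c) \<le> 0"
    then have pos: "\<beta> * (U s - c) > 0" by simp
    define lo where "lo = min s t"
    define hi where "hi = max s t"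
    have lohi: "lo \<le> hi" "{lo..hi} \<subseteq> {y1..y2}" using s t(1) at tb ya by2 by (auto simp: lo_def hi_def)
    have cc: "continuous_on {lo..hi} U" using continuous_on_subset[OF cU lohi(2)] .
    have opp: "(U lo - c) * (U hi - c) < 0"
    proof -
      have "(U s - c) * (U t - c) < 0"
      proof -
        have "\<beta> * (U s - c) * (\<beta> * (U t - c)) \<le> 0" using pos t(3) by (simp add: mult_nonneg_nonpos)
        moreover have "\<beta> * (U t - c) \<noteq> 0"
        proof
          assume "\<beta> * (U t - c) = 0"
          then show False using pos t(2) by simp
        qed
        moreover have "\<beta> * (U s - c) * (\<beta> * (U t - c)) \<noteq> 0"
          using pos \<open>\<beta> * (U t - c) \<noteq> 0\<close> by (metis less_irrefl mult_eq_0_iff)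
        ultimately have "\<beta> * (U s - c) * (\<beta> * (U t - c)) < 0" by linarith
        then have "(\<beta> * \<beta>) * ((U s - c) * (U t - c)) < 0" by (simp add: algebra_simps)
        moreover have "\<beta> * \<beta> \<ge> 0" by simp
        ultimately show ?thesis by (meson mult_nonneg_nonneg not_le)
      qed
      then show ?thesis by (cases "s \<le> t") (auto simp: lo_def hi_def algebra_simps)
    qed
    obtain x where x: "lo \<le> x" "x \<le> hi" "U x = c"
    proof (cases "U lo - c < 0")
      case True
      then have "U hi - c > 0" using opp by (simp add: mult_less_0_iff)
      then show ?thesis using IVT'[of U lo c hi] True lohi(1) cc that by auto
    next
      case False
      then have "U lo - c > 0" "U hi - c < 0" using opp by (auto simp: mult_less_0_iff)
      then show ?thesis using IVT2'[of U hi c lo] lohi(1) cc that by auto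
    qed
    have "x \<noteq> s" using x(3) noZ[OF s] by auto
    moreover have "x \<noteq> t" using x(3) t(2) by auto
    ultimately have "x \<in> {a<..<b}" using x(1,2) s at tb by (auto simp: lo_def hi_def)
    then show False using noZ x(3) by blast
  qed
  have pa: "\<phi> a = 0"
  proof (cases "a = y1")
    case True then show ?thesis using bc1 by simp
  next
    case False then have "a \<in> Z" using aA by (simp add: A_def)
    then show ?thesis using phi_zero_crit by (simp add: Z_def)
  qed
  have pb: "\<phi> b = 0"
  proof (cases "b = y2")
    case True then show ?thesis using bc2 by simp
  next
    case False then have "b \<in> Z" using bB by (simp add: B_def)
    then show ?thesis using phi_zero_crit by (simp add: Z_def)
  qed
  have z: "\<forall>t\<in>{a<..<b}. \<phi> t = 0"
    by (rule energy[OF ya ab by2 _ pa pb]) (use noZ sgn in blast)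
  define m where "m = (a + b) / 2"
  have m: "m \<in> {a<..<b}" "y1 < m" "m < y2" using ab ya by2 by (auto simp: m_def)
  have d1: "(\<phi> has_real_derivative \<phi>' m) (at m)" using dphi[of m] m by (simp add: at_within_Icc_at)
  have d2: "(\<phi> has_real_derivative 0) (at m)"
    by (rule has_field_derivative_transform_within_open[OF DERIV_const _ m(1)]) (use z in auto)
  have "\<phi>' m = 0" using DERIV_unique[OF d1 d2] .
  then show ?thesis using z m by (intro bexI[of _ m]) auto
qed

lemma phi_all_zero: "\<forall>y\<in>{y1..y2}. \<phi> y = 0"
proof -
  define Z0 where "Z0 = {y \<in> {y1..y2}. \<phi> y = 0} \<inter> {y \<in> {y1..y2}. \<phi>' y = 0}"
  have cl: "closedin (top_of_set {y1..y2}) Z0"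
    unfolding Z0_def
    by (intro closedin_Int continuous_closedin_preimage_constant cphi cphi')
  have op: "openin (top_of_set {y1..y2}) Z0"
    unfolding openin_euclidean_subtopology_iff
  proof (intro conjI ballI)
    show "Z0 \<subseteq> {y1..y2}" by (auto simp: Z0_def)
    fix p assume "p \<in> Z0"
    then have p: "p \<in> {y1..y2}" "\<phi> p = 0" "\<phi>' p = 0" by (auto simp: Z0_def)
    obtain e where e: "e > 0" "\<forall>x\<in>{y1..y2}. \<bar>x - p\<bar> < e \<longrightarrow> \<phi> x = 0 \<and> \<phi>' x = 0"
      using local_open[OF p] by blast
    show "\<exists>e>0. \<forall>x'\<in>{y1..y2}. dist x' p < e \<longrightarrow> x' \<in> Z0"
      using e by (intro exI[of _ e]) (auto simp: Z0_def dist_real_def)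
  qed
  have ne: "Z0 \<noteq> {}" using exists_zero_interval by (auto simp: Z0_def)
  have "Z0 = {y1..y2}"
  proof -
    have "connected {y1..y2}" by (rule connected_Icc)
    then show ?thesis unfolding connected_clopen using op cl ne by blast
  qed
  then show ?thesis by (auto simp: Z0_def)
qed

end

theorem theorem2p1:
  fixes U U' U'' \<phi> \<phi>' \<phi>'' :: "real \<Rightarrow> real"
    and y1 y2 c \<alpha> \<beta> :: real
  assumes y12: "y1 < y2"
    and U_C2: "C2_on y1 y2 U U' U''"
    and finite_levels: "\<forall>d. Inf (U ` {y1..y2}) < d \<and> d < Sup (U ` {y1..y2})
                             \<longrightarrow> finite {y \<in> {y1..y2}. U y = d}"
    and alpha_pos: "\<alpha> > 0"
    and phi_H2: "H2_on y1 y2 \<phi> \<phi>' \<phi>''"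
    and phi_nontrivial: "\<exists>y\<in>{y1..y2}. \<phi> y \<noteq> 0"
    and phi_eq: "AE y in lborel. y \<in> {y1<..<y2} \<and> U y \<noteq> c \<longrightarrow>
                   - \<phi>'' y + \<alpha>^2 * \<phi> y - (\<beta> - U'' y) / (U y - c) * \<phi> y = 0"
    and bc: "\<phi> y1 = 0" "\<phi> y2 = 0"
  shows "(\<exists>z\<in>{y1..y2}. c = U z \<and> \<beta> = U'' z)
         \<or> c = U y1 \<or> c = U y2
         \<or> critical_value_on y1 y2 U' U c
         \<or> c \<notin> U ` {y1..y2}"
proof (rule ccontr)
  assume H: "\<not> ?thesis"
  then have cR: "c \<in> U ` {y1..y2}" and c1: "U y1 \<noteq> c" and c2: "U y2 \<noteq> c"
    and nc: "\<And>y. y \<in> {y1..y2} \<Longrightarrow> U y = c \<Longrightarrow> U' y \<noteq> 0"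
    and nb: "\<And>y. y \<in> {y1..y2} \<Longrightarrow> U y = c \<Longrightarrow> \<beta> \<noteq> U'' y"
    by (auto simp: critical_value_on_def)
  have dU: "\<And>y. y \<in> {y1..y2} \<Longrightarrow> (U has_real_derivative U' y) (at y within {y1..y2})"
    using U_C2 by (auto simp: C2_on_def)
  have cU: "continuous_on {y1..y2} U" by (rule DERIV_continuous_on, erule dU)
  have ne: "{y1..y2} \<noteq> {}" using y12 by simp
  obtain x0 where x0: "x0 \<in> {y1..y2}" "\<And>y. y \<in> {y1..y2} \<Longrightarrow> U x0 \<le> U y"
    using continuous_attains_inf[OF compact_Icc ne cU] by blast
  obtain x1 where x1: "x1 \<in> {y1..y2}" "\<And>y. y \<in> {y1..y2} \<Longrightarrow> U y \<le> U x1"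
    using continuous_attains_sup[OF compact_Icc ne cU] by blast
  obtain yc where yc: "yc \<in> {y1..y2}" "U yc = c" using cR by blast
  have low: "U x0 < c"
  proof -
    have "U x0 \<le> c" using x0(2)[OF yc(1)] yc(2) by simp
    moreover have "U x0 \<noteq> c"
    proof
      assume e: "U x0 = c"
      then have xi: "y1 < x0" "x0 < y2" using x0(1) c1 c2 by (auto simp: le_less)
      have d: "(U has_real_derivative U' x0) (at x0)" using dU[OF x0(1)] xi by (simp add: at_within_Icc_at)
      have "U' x0 = 0"
      proof (rule DERIV_local_min[OF d])
        show "0 < min (x0 - y1) (y2 - x0)" using xi by simp
        show "\<forall>y. \<bar>x0 - y\<bar> < min (x0 - y1) (y2 - x0) \<longrightarrow> U x0 \<le> U y"
          using x0(2) by (auto simp: abs_if split: if_splits)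
      qed
      then show False using nc[OF x0(1) e] by simp
    qed
    ultimately show ?thesis by simp
  qed
  have high: "U x1 > c"
  proof -
    have "c \<le> U x1" using x1(2)[OF yc(1)] yc(2) by simp
    moreover have "U x1 \<noteq> c"
    proof
      assume e: "U x1 = c"
      then have xi: "y1 < x1" "x1 < y2" using x1(1) c1 c2 by (auto simp: le_less)
      have d: "(U has_real_derivative U' x1) (at x1)" using dU[OF x1(1)] xi by (simp add: at_within_Icc_at)
      have "U' x1 = 0"
      proof (rule DERIV_local_max[OF d])
        show "0 < min (x1 - y1) (y2 - x1)" using xi by simp
        show "\<forall>y. \<bar>x1 - y\<bar> < min (x1 - y1) (y2 - x1) \<longrightarrow> U y \<le> U x1"
          using x1(2) by (auto simp: abs_if split: if_splits)
      qed
      then show False using nc[OF x1(1) e] by simp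
    qed
    ultimately show ?thesis by simp
  qed
  have inf: "Inf (U ` {y1..y2}) = U x0" using x0 by (intro cInf_eq_minimum) auto
  have sup: "Sup (U ` {y1..y2}) = U x1" using x1 by (intro cSup_eq_maximum) auto
  have fin: "finite {y \<in> {y1..y2}. U y = c}" using finite_levels low high inf sup by auto
  interpret RK U U' U'' \<phi> \<phi>' \<phi>'' y1 y2 c \<alpha> \<beta>
  proof
    show "\<exists>t\<in>{y1..y2}. U t < c" using x0(1) low by blast
    show "\<exists>t\<in>{y1..y2}. c < U t" using x1(1) high by blast
  qed (use y12 U_C2 alpha_pos phi_H2 phi_eq bc fin c1 c2 nc nb in auto)
  show False using phi_all_zero phi_nontrivial by auto
qed

end
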